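(* Let $\Gamma$ be a non-amenable group. Then there exists $p>1$ such that $T_1(\Gamma)\nsubseteq \ell^p(\Gamma)$.
   Context: For a group $\Gamma$, the space $T_1(\Gamma)$ of Littlewood functions is the space of all functions $f\colon\Gamma\to\mathbf{C}$ for which there exist $f_1,f_2\colon\Gamma\times\Gamma\to\mathbf{C}$ with $f(x^{-1}y)=f_1(x,y)+f_2(x,y)$ for all $x,y\in\Gamma$, such that $\sup_x\sum_y|f_1(x,y)|<\infty$ and $\sup_y\sum_x|f_2(x,y)|<\infty$. *)

theory Defs
  imports "HOL-Analysis.Analysis"
begin

text \<open>A (discrete) group is modelled as a type of class group_add (not necessarily
commutative); the product x y is written x + y and x^{-1} is written - x.\<close>

text \<open>Left-invariant mean on all subsets (finitely additive left-invariant probability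
measure); a group is amenable iff such a mean exists (von Neumann).\<close>
definition left_invariant_mean :: "('a::group_add set \<Rightarrow> real) \<Rightarrow> bool" where
  "left_invariant_mean \<mu> \<longleftrightarrow>
     \<mu> UNIV = 1 \<and> (\<forall>A. 0 \<le> \<mu> A) \<and>
     (\<forall>A B. A \<inter> B = {} \<longrightarrow> \<mu> (A \<union> B) = \<mu> A + \<mu> B) \<and>
     (\<forall>g A. \<mu> ((\<lambda>a. g + a) ` A) = \<mu> A)"

definition amenable :: "'a::group_add itself \<Rightarrow> bool" where
  "amenable _ \<longleftrightarrow> (\<exists>\<mu>::'a set \<Rightarrow> real. left_invariant_mean \<mu>)"

definition littlewood :: "('a::group_add \<Rightarrow> complex) set" where
  "littlewood = {f. \<exists>f1 f2 :: 'a \<Rightarrow> 'a \<Rightarrow> complex.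
      (\<forall>x y. f (- x + y) = f1 x y + f2 x y) \<and>
      (\<exists>C. \<forall>x. (\<lambda>y. norm (f1 x y)) summable_on UNIV \<and> (\<Sum>\<^sub>\<infinity>y. norm (f1 x y)) \<le> C) \<and>
      (\<exists>C. \<forall>y. (\<lambda>x. norm (f2 x y)) summable_on UNIV \<and> (\<Sum>\<^sub>\<infinity>x. norm (f2 x y)) \<le> C)}"

definition lp_space :: "real \<Rightarrow> ('a \<Rightarrow> complex) set" where
  "lp_space p = {f. (\<lambda>x. norm (f x) powr p) summable_on UNIV}"

end

theory Submission
  imports Defs
begin


definition folner :: "'a::group_add itself \<Rightarrow> bool" where
 "folner _ \<longleftrightarrow> (\<forall>G::'a set. finite G \<longrightarrow> (\<forall>e>0. \<exists>A. finite A \<and> A \<noteq> {} \<and>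
     (\<forall>h\<in>G. real (card ((\<lambda>a. h + a) ` A - A)) \<le> e * real (card A))))"

lemma card_trans_diff_bound:
  fixes A B :: "'a::group_add set" and g :: 'a
  assumes "finite A"
  shows "\<bar>real (card ((\<lambda>a. g + a) ` B \<inter> A)) - real (card (B \<inter> A))\<bar>
          \<le> real (card ((\<lambda>a. -g + a) ` A - A))"
proof -
  define A' where "A' = (\<lambda>a. -g + a) ` A"
  have finA': "finite A'" using assms by (simp add: A'_def)
  have injt: "inj (\<lambda>a::'a. -g + a)" by (auto intro: injI)
  have cA': "card A' = card A" unfolding A'_def using injt
    by (simp add: card_image inj_on_subset)
  have eq1: "(\<lambda>a. -g + a) ` ((\<lambda>a. g + a) ` B \<inter> A) = B \<inter> A'"
  proof -
    have "(\<lambda>a. -g + a) ` ((\<lambda>a. g + a) ` B \<inter> A) = (\<lambda>a. -g + a) ` ((\<lambda>a. g + a) ` B) \<inter> A'"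
      unfolding A'_def using injt by (simp add: image_Int)
    also have "(\<lambda>a. -g + a) ` ((\<lambda>a. g + a) ` B) = B"
      by (auto simp: image_image add.assoc[symmetric])
    finally show ?thesis .
  qed
  have c1: "card ((\<lambda>a. g + a) ` B \<inter> A) = card (B \<inter> A')"
    using eq1 injt by (metis card_image inj_on_subset subset_UNIV)
  have s1: "card (B \<inter> A') \<le> card (B \<inter> A) + card (A' - A)"
  proof -
    have "B \<inter> A' \<subseteq> (B \<inter> A) \<union> (A' - A)" by auto
    hence "card (B \<inter> A') \<le> card ((B \<inter> A) \<union> (A' - A))"
      using assms finA' by (intro card_mono) auto
    also have "\<dots> \<le> card (B \<inter> A) + card (A' - A)" by (rule card_Un_le)
    finally show ?thesis .
  qed
  have s2: "card (B \<inter> A) \<le> card (B \<inter> A') + card (A - A')"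
  proof -
    have "B \<inter> A \<subseteq> (B \<inter> A') \<union> (A - A')" by auto
    hence "card (B \<inter> A) \<le> card ((B \<inter> A') \<union> (A - A'))"
      using assms finA' by (intro card_mono) auto
    also have "\<dots> \<le> card (B \<inter> A') + card (A - A')" by (rule card_Un_le)
    finally show ?thesis .
  qed
  have e1: "card (A - A') = card A - card (A \<inter> A')"
    using assms by (simp add: card_Diff_subset_Int)
  have e2: "card (A' - A) = card A' - card (A' \<inter> A)"
    using finA' by (simp add: card_Diff_subset_Int)
  have "card (A - A') = card (A' - A)" using e1 e2 cA' by (simp add: Int_commute)
  with s1 s2 c1 show ?thesis unfolding A'_def by linarith
qed

lemma small_all_zero:
  fixes x :: real
  assumes "\<And>k. \<bar>x\<bar> \<le> 1 / real (Suc k)"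
  shows "x = 0"
proof (rule ccontr)
  assume "x \<noteq> 0"
  hence "\<bar>x\<bar> > 0" by simp
  then obtain n where n: "n > 0" "inverse (real n) < \<bar>x\<bar>" using ex_inverse_of_nat_less by blast
  with assms[of "n - 1"] show False by (simp add: divide_inverse)
qed

lemma compact_unit_cube: "compact {\<mu>::'b \<Rightarrow> real. \<forall>B. \<mu> B \<in> {0..1}}"
proof -
  have "compactin (product_topology (\<lambda>_. euclidean) UNIV) (PiE UNIV (\<lambda>_::'b. {0..1::real}))"
    by (simp add: compactin_PiE)
  moreover have "PiE UNIV (\<lambda>_::'b. {0..1::real}) = {\<mu>. \<forall>B. \<mu> B \<in> {0..1}}"
    by (auto simp: PiE_def Pi_def)
  ultimately show ?thesis by (simp add: euclidean_product_topology)
qed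

lemma cont_coord: "continuous_on UNIV (\<lambda>\<mu>::'b \<Rightarrow> real. \<mu> B)"
  by simp

lemma folner_amenable:
  assumes "folner TYPE('a::group_add)"
  shows "amenable TYPE('a)"
proof -
  define U where "U = {\<mu>::'a set \<Rightarrow> real. \<forall>B. \<mu> B \<in> {0..1}}"
  define Z1 where "Z1 = {\<mu>::'a set \<Rightarrow> real. \<mu> UNIV = 1}"
  define Zadd where "Zadd = (\<lambda>p::'a set \<times> 'a set. if fst p \<inter> snd p = {}
      then {\<mu>::'a set \<Rightarrow> real. \<mu> (fst p \<union> snd p) = \<mu> (fst p) + \<mu> (snd p)} else UNIV)"
  define Zinv where "Zinv = (\<lambda>(g::'a, B::'a set, k::nat).
      {\<mu>::'a set \<Rightarrow> real. \<bar>\<mu> ((\<lambda>a. g + a) ` B) - \<mu> B\<bar> \<le> 1 / real (Suc k)})"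
  define FF where "FF = insert Z1 (range Zadd \<union> range Zinv)"
  have cU: "compact U" unfolding U_def by (rule compact_unit_cube)
  have clo: "closed T" if "T \<in> FF" for T
  proof -
    have "closed Z1" unfolding Z1_def by (intro closed_Collect_eq) (auto intro: continuous_intros)
    moreover have "closed (Zadd p)" for p unfolding Zadd_def
      by (auto intro!: closed_Collect_eq continuous_intros)
    moreover have "closed (Zinv t)" for t unfolding Zinv_def
      by (auto intro!: closed_Collect_le continuous_intros split: prod.splits)
    ultimately show ?thesis using that unfolding FF_def by auto
  qed
  have fip: "U \<inter> \<Inter>F' \<noteq> {}" if F': "finite F'" "F' \<subseteq> FF" for F'
  proof -
    have "F' \<inter> range Zinv \<subseteq> Zinv ` UNIV" by auto
    moreover have "finite (F' \<inter> range Zinv)" using F' by simp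
    ultimately obtain C where C: "finite C" "F' \<inter> range Zinv = Zinv ` C"
      by (metis finite_subset_image subset_UNIV)
    define G where "G = (\<lambda>(g, B, k). - g) ` C"
    define K where "K = Max (insert 0 ((\<lambda>(g, B, k). k) ` C))"
    have finG: "finite G" unfolding G_def using C by simp
    have Kge: "k \<le> K" if "(g, B, k) \<in> C" for g B k
      unfolding K_def using C(1) that by (intro Max_ge) force+
    obtain A where A: "finite A" "A \<noteq> {}"
      "\<forall>h\<in>G. real (card ((\<lambda>a. h + a) ` A - A)) \<le> (1 / real (Suc K)) * real (card A)"
    proof -
      have "1 / real (Suc K) > 0" by simp
      from assms[unfolded folner_def, rule_format, OF finG this] show ?thesis using that by blast
    qed
    have cApos: "real (card A) > 0" using A by (simp add: card_gt_0_iff)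
    define \<mu> where "\<mu> = (\<lambda>B. real (card (B \<inter> A)) / real (card A))"
    have "\<mu> \<in> U" unfolding U_def \<mu>_def using cApos A(1)
      by (auto simp: card_mono divide_le_eq)
    moreover have "\<mu> \<in> T" if "T \<in> F'" for T
    proof -
      have TF: "T \<in> insert Z1 (range Zadd \<union> range Zinv)" using \<open>T \<in> F'\<close> F'(2) unfolding FF_def by auto
      have TC: "T \<in> Zinv ` C" if "T \<in> range Zinv" using that \<open>T \<in> F'\<close> C(2) by blast
      consider "T = Z1" | p where "T = Zadd p" | t where "t \<in> C" "T = Zinv t"
        using TF TC by blast
      then show ?thesis
      proof cases
        case 1
        then show ?thesis unfolding Z1_def \<mu>_def using cApos by simp
      next
        case (2 p)
        show ?thesis
        proof (cases "fst p \<inter> snd p = {}")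
          case True
          have "card ((fst p \<union> snd p) \<inter> A) = card (fst p \<inter> A) + card (snd p \<inter> A)"
            using True A(1) by (subst card_Un_disjoint[symmetric]) (auto simp: Int_Un_distrib2)
          then show ?thesis using True unfolding 2 Zadd_def \<mu>_def by (simp add: add_divide_distrib)
        qed (simp add: 2 Zadd_def)
      next
        case (3 t)
        obtain g B k where t: "t = (g, B, k)" by (cases t) auto
        have "-g \<in> G" unfolding G_def using 3 t by force
        hence h: "real (card ((\<lambda>a. -g + a) ` A - A)) \<le> (1 / real (Suc K)) * real (card A)"
          using A(3) by blast
        have "\<bar>\<mu> ((\<lambda>a. g + a) ` B) - \<mu> B\<bar>
              = \<bar>real (card ((\<lambda>a. g + a) ` B \<inter> A)) - real (card (B \<inter> A))\<bar> / real (card A)"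
          unfolding \<mu>_def by (simp add: diff_divide_distrib[symmetric])
        also have "\<dots> \<le> real (card ((\<lambda>a. -g + a) ` A - A)) / real (card A)"
          using card_trans_diff_bound[OF A(1), of g B] cApos by (simp add: divide_right_mono)
        also have "\<dots> \<le> 1 / real (Suc K)" using h cApos by (simp add: divide_le_eq)
        also have "\<dots> \<le> 1 / real (Suc k)" using Kge[of g B k] 3 t
          by (simp add: frac_le)
        finally show ?thesis unfolding 3 t Zinv_def by simp
      qed
    qed
    ultimately show ?thesis by blast
  qed
  have "U \<inter> \<Inter>FF \<noteq> {}"
    by (rule compact_imp_fip[OF cU]) (use clo fip in auto)
  then obtain \<mu> where \<mu>: "\<mu> \<in> U" "\<forall>T\<in>FF. \<mu> \<in> T" by blast
  have "left_invariant_mean \<mu>"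
    unfolding left_invariant_mean_def
  proof (intro conjI allI impI)
    show "\<mu> UNIV = 1" using \<mu>(2) unfolding FF_def Z1_def by auto
    show "0 \<le> \<mu> A" for A using \<mu>(1) unfolding U_def by auto
    show "\<mu> (A \<union> B) = \<mu> A + \<mu> B" if "A \<inter> B = {}" for A B
    proof -
      have "Zadd (A,B) \<in> FF" unfolding FF_def by blast
      hence "\<mu> \<in> Zadd (A,B)" using \<mu>(2) by blast
      thus ?thesis using that unfolding Zadd_def by simp
    qed
    show "\<mu> ((\<lambda>a. g + a) ` A) = \<mu> A" for g A
    proof -
      have "\<bar>\<mu> ((\<lambda>a. g + a) ` A) - \<mu> A\<bar> \<le> 1 / real (Suc k)" for k
      proof -
        have "Zinv (g,A,k) \<in> FF" unfolding FF_def by blast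
        hence "\<mu> \<in> Zinv (g,A,k)" using \<mu>(2) by blast
        thus ?thesis unfolding Zinv_def by simp
      qed
      thus ?thesis using small_all_zero by force
    qed
  qed
  thus ?thesis unfolding amenable_def by blast
qed



lemma sum_shift:
  fixes f :: "'a::group_add \<Rightarrow> real"
  assumes D: "finite D" and h1: "\<And>x. f (x + s) \<noteq> 0 \<Longrightarrow> x \<in> D" and h2: "\<And>x. f x \<noteq> 0 \<Longrightarrow> x \<in> D"
  shows "(\<Sum>x\<in>D. f (x + s)) = (\<Sum>x\<in>D. f x)"
proof -
  have "(\<Sum>x\<in>D. f (x + s)) = (\<Sum>x\<in>{x. f (x + s) \<noteq> 0}. f (x + s))"
    using D h1 by (intro sum.mono_neutral_right) auto
  also have "\<dots> = (\<Sum>y\<in>(\<lambda>x. x + s) ` {x. f (x + s) \<noteq> 0}. f y)"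
    by (subst sum.reindex) (auto intro: inj_onI)
  also have "(\<lambda>x. x + s) ` {x. f (x + s) \<noteq> 0} = {y. f y \<noteq> 0}"
  proof (auto)
    fix y assume "f y \<noteq> 0"
    thus "y \<in> (\<lambda>x. x + s) ` {x. f (x + s) \<noteq> 0}"
      by (intro image_eqI[where x="y + - s"]) (auto simp: add.assoc)
  qed
  also have "(\<Sum>y\<in>{y. f y \<noteq> 0}. f y) = (\<Sum>x\<in>D. f x)"
    using D h2 by (intro sum.mono_neutral_left) auto
  finally show ?thesis .
qed

lemma lin_aux2: fixes Q MM A B :: real
  assumes "Q - MM \<ge> (1/2) * (A - 2 * B + MM)" "Q - MM \<ge> 0" shows "MM \<le> Q - 1/4 * (Q - 2 * B + A)"
  using assms by (simp add: field_simps)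

locale nf =
  fixes S1 :: "'a::group_add set" and e :: real
  assumes finS1: "finite S1"
    and symS1: "\<And>s. s \<in> S1 \<Longrightarrow> -s \<in> S1"
    and epos: "e > 0"
    and bnd: "\<And>B. finite B \<Longrightarrow> B \<noteq> {} \<Longrightarrow>
                 \<exists>s\<in>S1. real (card {x\<in>B. x + s \<notin> B}) > e * real (card B)"
begin

definition S where "S = insert 0 S1"
definition m where "m = real (card S1)"
definition mu where "mu s = (if s = 0 then 1/2 else 0) + (if s \<in> S1 then 1/(2*m) else 0)"
definition Kop :: "('a \<Rightarrow> real) \<Rightarrow> 'a \<Rightarrow> real" where
  "Kop \<phi> x = (\<Sum>s\<in>S. mu s * \<phi> (x + s))"

lemma S1ne: "S1 \<noteq> {}"
  using bnd[of "{0}"] by auto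

lemma e_lt1: "e < 1"
proof -
  obtain s where "s \<in> S1" "real (card {x\<in>{0::'a}. x + s \<notin> {0}}) > e * real (card {0::'a})"
    using bnd[of "{0}"] by auto
  moreover have "card {x\<in>{0::'a}. x + s \<notin> {0}} \<le> 1"
    by (rule order_trans[OF card_mono[of "{0}"]]) auto
  ultimately show ?thesis by simp
qed

lemma finS: "finite S" unfolding S_def using finS1 by simp
lemma zero_S: "0 \<in> S" unfolding S_def by simp
lemma S1_S: "S1 \<subseteq> S" unfolding S_def by auto
lemma m_pos: "m > 0" unfolding m_def using finS1 S1ne by (simp add: card_gt_0_iff)
lemma m_ge1: "m \<ge> 1"
proof -
  have "card S1 > 0" using finS1 S1ne by (simp add: card_gt_0_iff)
  thus ?thesis unfolding m_def by simp
qed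
lemma mu_nonneg: "mu s \<ge> 0" unfolding mu_def using m_pos by simp
lemma mu0: "mu 0 \<ge> 1/2" unfolding mu_def using m_pos by simp
lemma mu_S1: "s \<in> S1 \<Longrightarrow> mu s \<ge> 1/(2*m)" unfolding mu_def using m_pos by simp
lemma mu_pos: "s \<in> S \<Longrightarrow> mu s > 0"
proof -
  assume "s \<in> S"
  hence "s = 0 \<or> s \<in> S1" unfolding S_def by auto
  thus ?thesis using mu0 mu_S1[of s] m_pos by (auto intro: less_le_trans[rotated])
qed
lemma symS: "s \<in> S \<Longrightarrow> -s \<in> S" unfolding S_def using symS1 by auto
lemma mu_sym: "mu (-s) = mu s"
proof -
  have "(-s \<in> S1) = (s \<in> S1)" using symS1 by (metis minus_minus)
  thus ?thesis unfolding mu_def by simp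
qed
lemma sum_mu: "(\<Sum>s\<in>S. mu s) = 1"
proof -
  have "(\<Sum>s\<in>S. mu s) = (\<Sum>s\<in>S. (if s = 0 then 1/2 else 0)) + (\<Sum>s\<in>S. (if s \<in> S1 then 1/(2*m) else 0))"
    unfolding mu_def by (simp add: sum.distrib)
  also have "(\<Sum>s\<in>S. (if s = 0 then 1/2 else 0)) = (1/2::real)"
    using finS zero_S by (simp add: sum.delta)
  also have "(\<Sum>s\<in>S. (if s \<in> S1 then 1/(2*m) else 0)) = (\<Sum>s\<in>S1. 1/(2*m))"
    using finS S1_S by (simp add: sum.If_cases Int_absorb1)
  also have "\<dots> = 1/2" using m_pos unfolding m_def by simp
  finally show ?thesis by simp
qed

lemma Kop_mono: "(\<And>x. \<phi> x \<le> \<psi> x) \<Longrightarrow> Kop \<phi> x \<le> Kop \<psi> x"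
  unfolding Kop_def by (intro sum_mono mult_left_mono) (auto simp: mu_nonneg)

lemma Kop_nonneg: "(\<And>x. 0 \<le> \<phi> x) \<Longrightarrow> 0 \<le> Kop \<phi> x"
  unfolding Kop_def by (intro sum_nonneg mult_nonneg_nonneg) (auto simp: mu_nonneg)

lemma Kop_scale: "Kop (\<lambda>x. c * \<phi> x) x = c * Kop \<phi> x"
  unfolding Kop_def by (simp add: sum_distrib_left algebra_simps)

lemma coarea:
  assumes D: "finite D"
  shows "\<forall>\<psi>. (\<forall>x. 0 \<le> \<psi> x) \<longrightarrow> (\<forall>x. \<psi> x \<noteq> 0 \<longrightarrow> x \<in> D) \<longrightarrow> card {x. \<psi> x \<noteq> 0} = n \<longrightarrow>
     e * (\<Sum>x\<in>D. \<psi> x) \<le> (\<Sum>s\<in>S1. \<Sum>x\<in>D. max 0 (\<psi> x - \<psi> (x + s)))"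
proof (induction n rule: less_induct)
  case (less n)
  show ?case
  proof (intro allI impI)
    fix \<psi> :: "'a \<Rightarrow> real"
    assume nn: "\<forall>x. 0 \<le> \<psi> x" and sp: "\<forall>x. \<psi> x \<noteq> 0 \<longrightarrow> x \<in> D" and cn: "card {x. \<psi> x \<noteq> 0} = n"
    define Z where "Z = {x. \<psi> x \<noteq> 0}"
    have ZD: "Z \<subseteq> D" using sp unfolding Z_def by auto
    have finZ: "finite Z" using ZD D finite_subset by blast
    have rhs_nn: "0 \<le> (\<Sum>s\<in>S1. \<Sum>x\<in>D. max 0 (\<psi> x - \<psi> (x + s)))"
      by (intro sum_nonneg) auto
    show "e * (\<Sum>x\<in>D. \<psi> x) \<le> (\<Sum>s\<in>S1. \<Sum>x\<in>D. max 0 (\<psi> x - \<psi> (x + s)))"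
    proof (cases "Z = {}")
      case True
      hence "\<psi> x = 0" for x unfolding Z_def by auto
      thus ?thesis using rhs_nn by simp
    next
      case False
      define m0 where "m0 = Min (\<psi> ` Z)"
      have "m0 \<in> \<psi> ` Z" unfolding m0_def using finZ False by (intro Min_in) auto
      then obtain z where z: "z \<in> Z" "\<psi> z = m0" by auto
      have m0le: "m0 \<le> \<psi> x" if "x \<in> Z" for x unfolding m0_def using finZ that by simp
      have m0pos: "m0 > 0" using z nn unfolding Z_def by (metis less_eq_real_def mem_Collect_eq)
      define \<psi>' where "\<psi>' x = \<psi> x - m0 * (if x \<in> Z then 1 else 0)" for x
      have nn': "\<forall>x. 0 \<le> \<psi>' x" unfolding \<psi>'_def using m0le nn by auto
      have sub': "{x. \<psi>' x \<noteq> 0} \<subseteq> Z - {z}" unfolding \<psi>'_def Z_def using z by (auto simp: Z_def)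
      have sp': "\<forall>x. \<psi>' x \<noteq> 0 \<longrightarrow> x \<in> D" using sub' ZD by auto
      have "card {x. \<psi>' x \<noteq> 0} \<le> card (Z - {z})" using sub' finZ by (intro card_mono) auto
      also have "\<dots> < card Z" using z finZ by (intro card_Diff1_less)
      finally have lt: "card {x. \<psi>' x \<noteq> 0} < n" using cn Z_def by simp
      have IH: "e * (\<Sum>x\<in>D. \<psi>' x) \<le> (\<Sum>s\<in>S1. \<Sum>x\<in>D. max 0 (\<psi>' x - \<psi>' (x + s)))"
        using less.IH[OF lt] nn' sp' by blast
      have termeq: "max 0 (\<psi> x - \<psi> (x + s)) = max 0 (\<psi>' x - \<psi>' (x + s)) + m0 * (if x \<in> Z \<and> x + s \<notin> Z then 1 else 0)" for x s
      proof (cases "x \<in> Z")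
        case True
        show ?thesis
        proof (cases "x + s \<in> Z")
          case True
          then show ?thesis using \<open>x \<in> Z\<close> unfolding \<psi>'_def by simp
        next
          case False
          hence "\<psi> (x + s) = 0" unfolding Z_def by simp
          then show ?thesis using \<open>x \<in> Z\<close> False m0le[OF \<open>x \<in> Z\<close>] using nn unfolding \<psi>'_def by (simp add: max_def)
        qed
      next
        case False
        hence "\<psi> x = 0" unfolding Z_def by simp
        moreover have "\<psi>' (x + s) \<ge> 0" using nn' by blast
        moreover have "\<psi>' x = 0" unfolding \<psi>'_def using False \<open>\<psi> x = 0\<close> by simp
        moreover have "\<psi> (x + s) \<ge> 0" using nn by blast
        ultimately show ?thesis using False by (simp add: max_def)
      qed
      have cnt: "(\<Sum>x\<in>D. m0 * (if x \<in> Z \<and> x + s \<notin> Z then 1 else 0)) = m0 * real (card {x\<in>Z. x + s \<notin> Z})" for s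
      proof -
        have "(\<Sum>x\<in>D. m0 * (if x \<in> Z \<and> x + s \<notin> Z then 1 else 0)) = m0 * (\<Sum>x\<in>D. (if x \<in> {x\<in>Z. x + s \<notin> Z} then 1 else 0))"
          by (simp add: sum_distrib_left)
        also have "(\<Sum>x\<in>D. (if x \<in> {x\<in>Z. x + s \<notin> Z} then 1 else 0)) = real (card {x\<in>Z. x + s \<notin> Z})"
          using D ZD by (subst sum.If_cases) (auto simp: Int_absorb1 subset_iff)
        finally show ?thesis .
      qed
      obtain s0 where s0: "s0 \<in> S1" "real (card {x\<in>Z. x + s0 \<notin> Z}) > e * real (card Z)"
        using bnd[OF finZ False] by blast
      have "(\<Sum>s\<in>S1. \<Sum>x\<in>D. max 0 (\<psi> x - \<psi> (x + s)))
          = (\<Sum>s\<in>S1. \<Sum>x\<in>D. max 0 (\<psi>' x - \<psi>' (x + s))) + (\<Sum>s\<in>S1. m0 * real (card {x\<in>Z. x + s \<notin> Z}))"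
        by (simp add: termeq sum.distrib cnt)
      moreover have "(\<Sum>s\<in>S1. m0 * real (card {x\<in>Z. x + s \<notin> Z})) \<ge> m0 * real (card {x\<in>Z. x + s0 \<notin> Z})"
        using s0(1) finS1 m0pos by (intro member_le_sum) auto
      moreover have "m0 * real (card {x\<in>Z. x + s0 \<notin> Z}) \<ge> m0 * (e * real (card Z))"
        using s0(2) m0pos by simp
      moreover have "(\<Sum>x\<in>D. \<psi> x) = (\<Sum>x\<in>D. \<psi>' x) + m0 * real (card Z)"
      proof -
        have "(\<Sum>x\<in>D. \<psi> x) = (\<Sum>x\<in>D. \<psi>' x + m0 * (if x \<in> Z then 1 else 0))"
          unfolding \<psi>'_def by simp
        also have "\<dots> = (\<Sum>x\<in>D. \<psi>' x) + m0 * (\<Sum>x\<in>D. (if x \<in> Z then 1 else 0))"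
          by (simp add: sum.distrib sum_distrib_left)
        also have "(\<Sum>x\<in>D. (if x \<in> Z then 1 else 0)) = real (card Z)"
          using D ZD by (subst sum.If_cases) (auto simp: Int_absorb1)
        finally show ?thesis .
      qed
      ultimately show ?thesis using IH epos
        by (simp add: algebra_simps)
    qed
  qed
qed


definition q where "q = 1 - e^2 / (32 * m^2)"

lemma q_pos: "0 < q" and q_lt1: "q < 1"
proof -
  have "e^2 < 1" using epos e_lt1 by (simp add: power_less_one_iff abs_less_iff)
  moreover have "1 \<le> 32 * m^2" using one_le_power[OF m_ge1, of 2] by linarith
  ultimately have "e^2 / (32 * m^2) < 1" by (simp add: divide_less_eq)
  thus "0 < q" unfolding q_def by simp
  have "0 < e^2 / (32 * m^2)" using epos m_pos by simp
  thus "q < 1" unfolding q_def by simp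
qed

lemma pointwise_var:
  fixes a :: "'a \<Rightarrow> real"
  shows "(\<Sum>s\<in>S. mu s * a s)\<^sup>2 \<le> (\<Sum>s\<in>S. mu s * (a s)\<^sup>2) - (1/4) * (\<Sum>s\<in>S. mu s * (a s - a 0)\<^sup>2)"
proof -
  define M where "M = (\<Sum>s\<in>S. mu s * a s)"
  define Q where "Q = (\<Sum>s\<in>S. mu s * (a s)\<^sup>2)"
  have V: "(\<Sum>s\<in>S. mu s * (a s - M)\<^sup>2) = Q - 2 * M * M + M\<^sup>2 * (\<Sum>s\<in>S. mu s)"
    unfolding Q_def M_def
    by (simp add: power2_diff algebra_simps sum.distrib sum_subtractf sum_distrib_left sum_distrib_right)
  have W: "(\<Sum>s\<in>S. mu s * (a s - a 0)\<^sup>2) = Q - 2 * a 0 * M + (a 0)\<^sup>2 * (\<Sum>s\<in>S. mu s)"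
    unfolding Q_def M_def
    by (simp add: power2_diff algebra_simps sum.distrib sum_subtractf sum_distrib_left sum_distrib_right)
  have V0: "(\<Sum>s\<in>S. mu s * (a s - M)\<^sup>2) \<ge> mu 0 * (a 0 - M)\<^sup>2"
    using finS zero_S by (intro member_le_sum) (auto simp: mu_nonneg)
  have h: "mu 0 * (a 0 - M)\<^sup>2 \<ge> (1/2) * (a 0 - M)\<^sup>2"
    using mu0 by (intro mult_right_mono) auto
  have ex: "(a 0 - M)\<^sup>2 = a 0 * a 0 - 2 * a 0 * M + M * M" by (simp add: power2_eq_square algebra_simps)
  have V': "(\<Sum>s\<in>S. mu s * (a s - M)\<^sup>2) = Q - M * M" using V sum_mu by (simp add: power2_eq_square)
  have W': "(\<Sum>s\<in>S. mu s * (a s - a 0)\<^sup>2) = Q - 2 * a 0 * M + a 0 * a 0" using W sum_mu by (simp add: power2_eq_square)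
  have "M\<^sup>2 = M * M" by (simp add: power2_eq_square)
  have lin_aux: "\<And>(V::real) Q MM t Y P. V = Q - MM \<Longrightarrow> t \<le> V \<Longrightarrow> (1/2)*Y \<le> t \<Longrightarrow> Y = P \<Longrightarrow> (1/2)*P \<le> Q - MM"
    by linarith
  have X: "Q - M * M \<ge> (1/2) * (a 0 * a 0 - 2 * a 0 * M + M * M)" by (rule lin_aux[OF V' V0 h ex])
  have X0: "Q - M * M \<ge> 0"
  proof -
    have "0 \<le> (1/2) * (a 0 - M)\<^sup>2" by simp
    thus ?thesis using V' V0 h by linarith
  qed
  have G: "M * M \<le> Q - 1/4 * (Q - 2 * a 0 * M + a 0 * a 0)"
  proof -
    have X': "Q - M * M \<ge> (1/2) * (a 0 * a 0 - 2 * (a 0 * M) + M * M)" using X by (simp add: mult.assoc)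
    have "M * M \<le> Q - 1/4 * (Q - 2 * (a 0 * M) + a 0 * a 0)" by (rule lin_aux2[OF X' X0])
    thus ?thesis by (simp add: mult.assoc)
  qed
  show ?thesis using G W' \<open>M\<^sup>2 = M * M\<close> unfolding M_def[symmetric] Q_def[symmetric]
    by simp
qed

lemma l2_contract:
  assumes D: "finite D" and nn: "\<And>x. 0 \<le> \<phi> x" and sp: "\<And>x s. s \<in> S \<Longrightarrow> \<phi> (x + s) \<noteq> 0 \<Longrightarrow> x \<in> D"
  shows "(\<Sum>x\<in>D. (Kop \<phi> x)\<^sup>2) \<le> q * (\<Sum>x\<in>D. (\<phi> x)\<^sup>2)"
proof -
  define N where "N = (\<Sum>x\<in>D. (\<phi> x)\<^sup>2)"
  define E where "E = (\<Sum>s\<in>S1. \<Sum>x\<in>D. (\<phi> (x + s) - \<phi> x)\<^sup>2)"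
  have sp0: "x \<in> D" if "\<phi> x \<noteq> 0" for x using sp[of 0 x] zero_S that by simp
  have shift: "(\<Sum>x\<in>D. (\<phi> (x + s))\<^sup>2) = N" if "s \<in> S" for s
    unfolding N_def using sum_shift[of D "\<lambda>x. (\<phi> x)\<^sup>2" s] D sp[OF that] sp0 by simp
  have step1: "(\<Sum>x\<in>D. (Kop \<phi> x)\<^sup>2) \<le> (\<Sum>x\<in>D. \<Sum>s\<in>S. mu s * (\<phi> (x + s))\<^sup>2)
       - (1/4) * (\<Sum>x\<in>D. \<Sum>s\<in>S. mu s * (\<phi> (x + s) - \<phi> x)\<^sup>2)"
  proof -
    have "(\<Sum>x\<in>D. (Kop \<phi> x)\<^sup>2) \<le> (\<Sum>x\<in>D. (\<Sum>s\<in>S. mu s * (\<phi> (x + s))\<^sup>2)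
       - (1/4) * (\<Sum>s\<in>S. mu s * (\<phi> (x + s) - \<phi> x)\<^sup>2))"
      unfolding Kop_def using pointwise_var[of "\<lambda>s. \<phi> (_ + s)"] by (intro sum_mono) simp
    also have "\<dots> = (\<Sum>x\<in>D. \<Sum>s\<in>S. mu s * (\<phi> (x + s))\<^sup>2)
       - (1/4) * (\<Sum>x\<in>D. \<Sum>s\<in>S. mu s * (\<phi> (x + s) - \<phi> x)\<^sup>2)"
      by (simp add: sum_subtractf sum_distrib_left)
    finally show ?thesis .
  qed
  have step2: "(\<Sum>x\<in>D. \<Sum>s\<in>S. mu s * (\<phi> (x + s))\<^sup>2) = N"
  proof -
    have "(\<Sum>x\<in>D. \<Sum>s\<in>S. mu s * (\<phi> (x + s))\<^sup>2) = (\<Sum>s\<in>S. mu s * (\<Sum>x\<in>D. (\<phi> (x + s))\<^sup>2))"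
      by (subst sum.swap) (simp add: sum_distrib_left)
    also have "\<dots> = (\<Sum>s\<in>S. mu s * N)" using shift by simp
    also have "\<dots> = N" using sum_mu by (simp add: sum_distrib_right[symmetric])
    finally show ?thesis .
  qed
  have step3: "(\<Sum>x\<in>D. \<Sum>s\<in>S. mu s * (\<phi> (x + s) - \<phi> x)\<^sup>2) \<ge> E / (2 * m)"
  proof -
    have "(\<Sum>x\<in>D. \<Sum>s\<in>S. mu s * (\<phi> (x + s) - \<phi> x)\<^sup>2) = (\<Sum>s\<in>S. \<Sum>x\<in>D. mu s * (\<phi> (x + s) - \<phi> x)\<^sup>2)"
      by (rule sum.swap)
    also have "\<dots> \<ge> (\<Sum>s\<in>S1. \<Sum>x\<in>D. mu s * (\<phi> (x + s) - \<phi> x)\<^sup>2)"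
      using finS S1_S by (intro sum_mono2) (auto intro!: sum_nonneg simp: mu_nonneg)
    moreover have "(\<Sum>s\<in>S1. \<Sum>x\<in>D. mu s * (\<phi> (x + s) - \<phi> x)\<^sup>2) \<ge> (\<Sum>s\<in>S1. \<Sum>x\<in>D. (1/(2*m)) * (\<phi> (x + s) - \<phi> x)\<^sup>2)"
      using mu_S1 by (intro sum_mono mult_right_mono) auto
    moreover have "(\<Sum>s\<in>S1. \<Sum>x\<in>D. (1/(2*m)) * (\<phi> (x + s) - \<phi> x)\<^sup>2) = E / (2 * m)"
      unfolding E_def by (simp add: sum_divide_distrib)
    ultimately show ?thesis by linarith
  qed
  have step4: "e^2 * N \<le> 4 * m * E"
  proof -
    have ca: "e * (\<Sum>x\<in>D. (\<phi> x)\<^sup>2) \<le> (\<Sum>s\<in>S1. \<Sum>x\<in>D. max 0 ((\<phi> x)\<^sup>2 - (\<phi> (x + s))\<^sup>2))"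
      using coarea[OF D, rule_format, of "\<lambda>x. (\<phi> x)\<^sup>2"] sp0 by auto
    have "(\<Sum>s\<in>S1. \<Sum>x\<in>D. max 0 ((\<phi> x)\<^sup>2 - (\<phi> (x + s))\<^sup>2))
        \<le> (\<Sum>s\<in>S1. \<Sum>x\<in>D. \<bar>\<phi> (x + s) - \<phi> x\<bar> * (\<phi> x + \<phi> (x + s)))"
    proof (intro sum_mono)
      fix s x
      have "(\<phi> x)\<^sup>2 - (\<phi> (x + s))\<^sup>2 = (\<phi> x - \<phi> (x + s)) * (\<phi> x + \<phi> (x + s))"
        by (simp add: power2_eq_square algebra_simps)
      also have "\<dots> \<le> \<bar>\<phi> (x + s) - \<phi> x\<bar> * (\<phi> x + \<phi> (x + s))"
        using nn[of x] nn[of "x + s"] by (intro mult_right_mono) auto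
      finally show "max 0 ((\<phi> x)\<^sup>2 - (\<phi> (x + s))\<^sup>2) \<le> \<bar>\<phi> (x + s) - \<phi> x\<bar> * (\<phi> x + \<phi> (x + s))"
        using nn[of x] nn[of "x + s"] by simp
    qed
    also have "\<dots> = (\<Sum>p\<in>S1 \<times> D. \<bar>\<phi> (snd p + fst p) - \<phi> (snd p)\<bar> * (\<phi> (snd p) + \<phi> (snd p + fst p)))"
      by (simp add: sum.cartesian_product case_prod_beta)
    finally have R: "e * N \<le> (\<Sum>p\<in>S1 \<times> D. \<bar>\<phi> (snd p + fst p) - \<phi> (snd p)\<bar> * (\<phi> (snd p) + \<phi> (snd p + fst p)))"
      using ca unfolding N_def by linarith
    have CS: "(\<Sum>p\<in>S1 \<times> D. \<bar>\<phi> (snd p + fst p) - \<phi> (snd p)\<bar> * (\<phi> (snd p) + \<phi> (snd p + fst p)))\<^sup>2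
        \<le> (\<Sum>p\<in>S1 \<times> D. (\<bar>\<phi> (snd p + fst p) - \<phi> (snd p)\<bar>)\<^sup>2) * (\<Sum>p\<in>S1 \<times> D. (\<phi> (snd p) + \<phi> (snd p + fst p))\<^sup>2)"
      by (rule Cauchy_Schwarz_ineq_sum)
    have E2: "(\<Sum>p\<in>S1 \<times> D. (\<bar>\<phi> (snd p + fst p) - \<phi> (snd p)\<bar>)\<^sup>2) = E"
      unfolding E_def by (simp add: sum.cartesian_product case_prod_beta)
    have T: "(\<Sum>p\<in>S1 \<times> D. (\<phi> (snd p) + \<phi> (snd p + fst p))\<^sup>2) \<le> 4 * m * N"
    proof -
      have "(\<Sum>p\<in>S1 \<times> D. (\<phi> (snd p) + \<phi> (snd p + fst p))\<^sup>2)
          \<le> (\<Sum>p\<in>S1 \<times> D. 2 * (\<phi> (snd p))\<^sup>2 + 2 * (\<phi> (snd p + fst p))\<^sup>2)"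
      proof (intro sum_mono)
        fix p
        have "0 \<le> (\<phi> (snd p) - \<phi> (snd p + fst p))\<^sup>2" by simp
        thus "(\<phi> (snd p) + \<phi> (snd p + fst p))\<^sup>2 \<le> 2 * (\<phi> (snd p))\<^sup>2 + 2 * (\<phi> (snd p + fst p))\<^sup>2"
          by (simp add: power2_eq_square algebra_simps)
      qed
      also have "\<dots> = (\<Sum>s\<in>S1. \<Sum>x\<in>D. 2 * (\<phi> x)\<^sup>2 + 2 * (\<phi> (x + s))\<^sup>2)"
        by (simp add: sum.cartesian_product case_prod_beta)
      also have "\<dots> = (\<Sum>s\<in>S1. 2 * N + 2 * N)"
      proof (intro sum.cong refl)
        fix s assume "s \<in> S1"
        hence "s \<in> S" using S1_S by auto
        have "(\<Sum>x\<in>D. 2 * (\<phi> x)\<^sup>2 + 2 * (\<phi> (x + s))\<^sup>2) = 2 * (\<Sum>x\<in>D. (\<phi> x)\<^sup>2) + 2 * (\<Sum>x\<in>D. (\<phi> (x + s))\<^sup>2)"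
          by (simp add: sum.distrib sum_distrib_left)
        thus "(\<Sum>x\<in>D. 2 * (\<phi> x)\<^sup>2 + 2 * (\<phi> (x + s))\<^sup>2) = 2 * N + 2 * N"
          using shift[OF \<open>s \<in> S\<close>] unfolding N_def by simp
      qed
      also have "\<dots> = 4 * m * N" unfolding m_def by simp
      finally show ?thesis .
    qed
    have Nnn: "N \<ge> 0" unfolding N_def by (intro sum_nonneg) auto
    have Enn: "E \<ge> 0" unfolding E_def by (intro sum_nonneg) auto
    have "(e * N)\<^sup>2 \<le> (\<Sum>p\<in>S1 \<times> D. \<bar>\<phi> (snd p + fst p) - \<phi> (snd p)\<bar> * (\<phi> (snd p) + \<phi> (snd p + fst p)))\<^sup>2"
      using R epos Nnn by (intro power_mono) auto
    also have "\<dots> \<le> (\<Sum>p\<in>S1 \<times> D. (\<bar>\<phi> (snd p + fst p) - \<phi> (snd p)\<bar>)\<^sup>2) * (\<Sum>p\<in>S1 \<times> D. (\<phi> (snd p) + \<phi> (snd p + fst p))\<^sup>2)"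
      by (rule CS)
    also have "\<dots> = E * (\<Sum>p\<in>S1 \<times> D. (\<phi> (snd p) + \<phi> (snd p + fst p))\<^sup>2)" using E2 by simp
    also have "\<dots> \<le> E * (4 * m * N)" using T Enn by (rule mult_left_mono)
    finally have "e^2 * N * N \<le> (4 * m * E) * N" by (simp add: power2_eq_square algebra_simps)
    thus ?thesis
    proof (cases "N = 0")
      case True thus ?thesis using Enn m_pos by simp
    next
      case False thus ?thesis using Nnn \<open>e^2 * N * N \<le> (4 * m * E) * N\<close>
        by (simp add: mult_le_cancel_right)
    qed
  qed
  have "(\<Sum>x\<in>D. (Kop \<phi> x)\<^sup>2) \<le> N - (1/4) * (E / (2 * m))"
    using step1 step2 step3 by linarith
  also have "\<dots> \<le> q * N"
  proof -
    have "e^2 * N / (4 * m) \<le> E" using step4 m_pos by (simp add: divide_le_eq mult.commute)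
    hence "(1/4) * (e^2 * N / (4 * m) / (2 * m)) \<le> (1/4) * (E / (2 * m))"
      using m_pos by (intro mult_left_mono divide_right_mono) auto
    moreover have "(1/4) * (e^2 * N / (4 * m) / (2 * m)) = e^2 / (32 * m^2) * N"
      by (simp add: power2_eq_square field_simps)
    moreover have "q * N = N - e^2 / (32 * m^2) * N" unfolding q_def by (simp add: algebra_simps)
    ultimately show ?thesis by linarith
  qed
  finally show ?thesis unfolding N_def .
qed

end



context nf
begin

primrec P :: "nat \<Rightarrow> 'a \<Rightarrow> real" where
  "P 0 = (\<lambda>g. if g = 0 then 1 else 0)"
| "P (Suc n) = Kop (P n)"

definition Supp where "Supp n = {g. P n g \<noteq> 0}"
definition DD where "DD n = (\<lambda>(z, s). z + - s) ` (Supp n \<times> S)"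

lemma P_nonneg: "0 \<le> P n g"
  by (induction n arbitrary: g) (auto intro: Kop_nonneg)

lemma DD_prop: "s \<in> S \<Longrightarrow> P n (x + s) \<noteq> 0 \<Longrightarrow> x \<in> DD n"
  unfolding DD_def Supp_def
  by (rule image_eqI[where x="(x + s, s)"]) (auto simp: add.assoc)

lemma Supp_sub_DD: "Supp n \<subseteq> DD n"
  using DD_prop[of 0 n] zero_S unfolding Supp_def by auto

lemma Supp_Suc_sub: "Supp (Suc n) \<subseteq> DD n"
proof
  fix g assume "g \<in> Supp (Suc n)"
  hence "(\<Sum>s\<in>S. mu s * P n (g + s)) \<noteq> 0" unfolding Supp_def by (simp add: Kop_def)
  then obtain s where "s \<in> S" "mu s * P n (g + s) \<noteq> 0"
    using sum.not_neutral_contains_not_neutral by blast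
  thus "g \<in> DD n" using DD_prop by auto
qed

lemma Supp_fin_card: "finite (Supp n) \<and> card (Supp n) \<le> card S ^ n"
proof (induction n)
  case 0
  have "Supp 0 = {0}" unfolding Supp_def by auto
  thus ?case by simp
next
  case (Suc n)
  have finD: "finite (DD n)" unfolding DD_def using Suc finS by simp
  have "card (Supp (Suc n)) \<le> card (DD n)" using finD Supp_Suc_sub by (rule card_mono)
  also have "\<dots> \<le> card (Supp n \<times> S)" unfolding DD_def by (rule card_image_le) (use Suc finS in simp)
  also have "\<dots> = card (Supp n) * card S" by (simp add: card_cartesian_product)
  also have "\<dots> \<le> card S ^ n * card S" using Suc by simp
  finally show ?case using finite_subset[OF Supp_Suc_sub finD] by (simp add: mult.commute)
qed

lemma finSupp: "finite (Supp n)" using Supp_fin_card by blast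
lemma finDD: "finite (DD n)" unfolding DD_def using finSupp finS by simp

lemma sum_P: "(\<Sum>g\<in>Supp n. P n g) = 1"
proof (induction n)
  case 0
  have "Supp 0 = {0}" unfolding Supp_def by auto
  thus ?case by simp
next
  case (Suc n)
  have "(\<Sum>g\<in>Supp (Suc n). P (Suc n) g) = (\<Sum>g\<in>DD n. P (Suc n) g)"
    using finDD Supp_Suc_sub by (intro sum.mono_neutral_left) (auto simp: Supp_def)
  also have "\<dots> = (\<Sum>s\<in>S. mu s * (\<Sum>g\<in>DD n. P n (g + s)))"
    by (simp add: Kop_def sum_distrib_left) (rule sum.swap)
  also have "\<dots> = (\<Sum>s\<in>S. mu s * (\<Sum>g\<in>DD n. P n g))"
  proof (rule sum.cong[OF refl])
    fix s assume "s \<in> S"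
    have "(\<Sum>g\<in>DD n. P n (g + s)) = (\<Sum>g\<in>DD n. P n g)"
      using DD_prop[OF \<open>s \<in> S\<close>, of n] Supp_sub_DD[of n]
      by (intro sum_shift[OF finDD]) (auto simp: Supp_def)
    thus "mu s * (\<Sum>g\<in>DD n. P n (g + s)) = mu s * (\<Sum>g\<in>DD n. P n g)" by simp
  qed
  also have "(\<Sum>g\<in>DD n. P n g) = (\<Sum>g\<in>Supp n. P n g)"
    using finDD Supp_sub_DD by (intro sum.mono_neutral_right) (auto simp: Supp_def)
  finally show ?case using Suc sum_mu by simp
qed

lemma P_l2: "(\<Sum>g\<in>Supp n. (P n g)\<^sup>2) \<le> q ^ n"
proof (induction n)
  case 0
  have "Supp 0 = {0}" unfolding Supp_def by auto
  thus ?case by simp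
next
  case (Suc n)
  have "(\<Sum>g\<in>Supp (Suc n). (P (Suc n) g)\<^sup>2) = (\<Sum>g\<in>DD n. (Kop (P n) g)\<^sup>2)"
    unfolding P.simps using finDD Supp_Suc_sub by (intro sum.mono_neutral_left) (auto simp: Supp_def)
  also have "\<dots> \<le> q * (\<Sum>g\<in>DD n. (P n g)\<^sup>2)"
    by (rule l2_contract[OF finDD P_nonneg DD_prop])
  also have "(\<Sum>g\<in>DD n. (P n g)\<^sup>2) = (\<Sum>g\<in>Supp n. (P n g)\<^sup>2)"
    using finDD Supp_sub_DD by (intro sum.mono_neutral_right) (auto simp: Supp_def)
  also have "q * \<dots> \<le> q * q ^ n" using Suc q_pos by (intro mult_left_mono) auto
  finally show ?case by simp
qed

lemma P_pt: "(P n g)\<^sup>2 \<le> q ^ n"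
proof (cases "g \<in> Supp n")
  case True
  have "(P n g)\<^sup>2 \<le> (\<Sum>g\<in>Supp n. (P n g)\<^sup>2)"
    using True finSupp by (intro member_le_sum) auto
  thus ?thesis using P_l2[of n] by linarith
next
  case False
  thus ?thesis using q_pos unfolding Supp_def by simp
qed

lemma P_first: "P (Suc n) g = (\<Sum>s\<in>S. mu s * P n (-s + g))"
proof (induction n arbitrary: g)
  case 0
  have "(\<Sum>s\<in>S. mu s * (if g + s = 0 then 1 else 0)) = (\<Sum>s\<in>S. (if s = -g then mu s else 0))"
  proof (intro sum.cong refl)
    fix s have "g + s = 0 \<longleftrightarrow> s = -g" by (metis neg_eq_iff_add_eq_0)
    thus "mu s * (if g + s = 0 then 1 else 0) = (if s = -g then mu s else 0)" by simp
  qed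
  also have "\<dots> = (if -g \<in> S then mu (-g) else 0)" using finS by (simp add: sum.delta')
  also have "\<dots> = (if g \<in> S then mu g else 0)" using symS mu_sym by (metis minus_minus)
  also have "\<dots> = (\<Sum>s\<in>S. (if s = g then mu s else 0))" using finS by (simp add: sum.delta')
  also have "\<dots> = (\<Sum>s\<in>S. mu s * (if -s + g = 0 then 1 else 0))"
  proof (intro sum.cong refl)
    fix s have "-s + g = 0 \<longleftrightarrow> s = g" by (metis eq_neg_iff_add_eq_0 neg_equal_iff_equal)
    thus "(if s = g then mu s else 0) = mu s * (if -s + g = 0 then 1 else 0)" by simp
  qed
  finally show ?case by (simp add: Kop_def)
next
  case (Suc n)
  have "P (Suc (Suc n)) g = (\<Sum>s\<in>S. mu s * P (Suc n) (g + s))" by (simp add: Kop_def)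
  also have "\<dots> = (\<Sum>s\<in>S. mu s * (\<Sum>t\<in>S. mu t * P n (-t + (g + s))))" using Suc by simp
  also have "\<dots> = (\<Sum>t\<in>S. mu t * (\<Sum>s\<in>S. mu s * P n ((-t + g) + s)))"
    unfolding sum_distrib_left by (subst sum.swap) (simp add: add.assoc mult.left_commute)
  also have "\<dots> = (\<Sum>t\<in>S. mu t * P (Suc n) (-t + g))" by (simp add: Kop_def)
  finally show ?case .
qed

lemma P_sym: "P n (-g) = P n g"
proof (induction n arbitrary: g)
  case 0 thus ?case by simp
next
  case (Suc n)
  have "P (Suc n) (-g) = (\<Sum>s\<in>S. mu s * P n (-g + s))" by (simp add: Kop_def)
  also have "\<dots> = (\<Sum>s\<in>S. mu s * P n (-s + g))"
    using Suc by (metis minus_add minus_minus)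
  also have "\<dots> = P (Suc n) g" by (rule P_first[symmetric])
  finally show ?case .
qed

end



lemma pow_powr: "x > 0 \<Longrightarrow> ((x::real) ^ n) powr a = (x powr a) ^ n"
  by (simp add: powr_realpow[symmetric] powr_powr powr_power mult.commute)

lemma power_mean_lb:
  fixes u :: "'b \<Rightarrow> real"
  assumes fin: "finite Z" and ne: "Z \<noteq> {}" and pos: "\<And>i. i \<in> Z \<Longrightarrow> u i > 0"
    and s1: "sum u Z = 1" and p: "p \<ge> 1"
  shows "real (card Z) powr (1 - p) \<le> (\<Sum>i\<in>Z. u i powr p)"
proof -
  define N where "N = real (card Z)"
  have Npos: "N > 0" unfolding N_def using fin ne by (simp add: card_gt_0_iff)
  have "(\<lambda>x. x powr p) (\<Sum>i\<in>Z. (1/N) *\<^sub>R u i) \<le> (\<Sum>i\<in>Z. (1/N) * (\<lambda>x. x powr p) (u i))"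
    using fin ne powr_convex[OF p] pos Npos
    by (intro convex_on_sum) (auto simp: N_def)
  moreover have "(\<Sum>i\<in>Z. (1/N) *\<^sub>R u i) = 1/N" using s1 by (simp add: sum_divide_distrib[symmetric])
  ultimately have h: "(1/N) powr p \<le> (1/N) * (\<Sum>i\<in>Z. u i powr p)"
    by (simp add: sum_distrib_left)
  have "N powr (1 - p) = N * (1/N) powr p"
    using Npos by (simp add: powr_diff powr_divide powr_one)
  also have "\<dots> \<le> N * ((1/N) * (\<Sum>i\<in>Z. u i powr p))" using h Npos by (intro mult_left_mono) auto
  also have "\<dots> = (\<Sum>i\<in>Z. u i powr p)" using Npos by simp
  finally show ?thesis unfolding N_def .
qed

context nf
begin

lemma Kop_pow_mono: "(\<And>x. \<phi> x \<le> \<psi> x) \<Longrightarrow> (Kop ^^ n) \<phi> x \<le> (Kop ^^ n) \<psi> x"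
proof (induction n arbitrary: x)
  case 0 thus ?case by simp
next
  case (Suc n) thus ?case by (simp add: Kop_mono)
qed

lemma Kop_pow_nonneg: "(\<And>x. 0 \<le> \<phi> x) \<Longrightarrow> 0 \<le> (Kop ^^ n) \<phi> x"
proof (induction n arbitrary: x)
  case 0 thus ?case by simp
next
  case (Suc n) thus ?case by (simp add: Kop_nonneg)
qed

lemma kernel_row:
  assumes Y: "finite Y" and nn: "\<And>y. 0 \<le> \<phi> y"
  shows "(\<Sum>y\<in>Y. P n (-x + y) * \<phi> y) \<le> (Kop ^^ n) \<phi> x"
proof (induction n arbitrary: x)
  case 0
  have "(\<Sum>y\<in>Y. P 0 (-x + y) * \<phi> y) = (\<Sum>y\<in>Y. (if y = x then \<phi> y else 0))"
  proof (intro sum.cong refl)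
    fix y have "-x + y = 0 \<longleftrightarrow> y = x" by (metis eq_neg_iff_add_eq_0 neg_equal_iff_equal)
    thus "P 0 (-x + y) * \<phi> y = (if y = x then \<phi> y else 0)" by simp
  qed
  also have "\<dots> = (if x \<in> Y then \<phi> x else 0)" using Y by (simp add: sum.delta')
  also have "\<dots> \<le> \<phi> x" using nn by simp
  finally show ?case by simp
next
  case (Suc n)
  have "(\<Sum>y\<in>Y. P (Suc n) (-x + y) * \<phi> y) = (\<Sum>y\<in>Y. (\<Sum>s\<in>S. mu s * P n (-(x + s) + y)) * \<phi> y)"
  proof (intro sum.cong refl)
    fix y
    have "\<And>s. -s + (-x + y) = -(x + s) + y" by (metis minus_add add.assoc)
    thus "P (Suc n) (-x + y) * \<phi> y = (\<Sum>s\<in>S. mu s * P n (-(x + s) + y)) * \<phi> y"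
      by (simp only: P_first)
  qed
  also have "\<dots> = (\<Sum>s\<in>S. mu s * (\<Sum>y\<in>Y. P n (-(x + s) + y) * \<phi> y))"
    by (simp add: sum_distrib_right sum_distrib_left mult.assoc) (rule sum.swap)
  also have "\<dots> \<le> (\<Sum>s\<in>S. mu s * (Kop ^^ n) \<phi> (x + s))"
    using Suc by (intro sum_mono mult_left_mono) (auto simp: mu_nonneg)
  also have "\<dots> = (Kop ^^ Suc n) \<phi> x" by (simp add: Kop_def)
  finally show ?case .
qed

lemma kernel_col:
  assumes X: "finite X" and nn: "\<And>y. 0 \<le> \<phi> y"
  shows "(\<Sum>x\<in>X. P n (-x + y) * \<phi> x) \<le> (Kop ^^ n) \<phi> y"
proof -
  have "P n (-x + y) = P n (-y + x)" for x
    using P_sym[of n "-x + y"] by (simp add: minus_add)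
  thus ?thesis using kernel_row[OF X nn, of n y] by simp
qed

definition H where "H = {g. \<exists>n. P n g > 0}"

lemma H0: "0 \<in> H" unfolding H_def by (rule CollectI, rule exI[of _ 0]) simp

lemma H_left: assumes s: "s \<in> S" shows "(-s + h \<in> H) = (h \<in> H)"
proof
  assume "-s + h \<in> H"
  then obtain n where n: "P n (-s + h) > 0" unfolding H_def by blast
  have "mu s * P n (-s + h) \<le> (\<Sum>t\<in>S. mu t * P n (-t + h))"
    using s finS by (intro member_le_sum[where f="\<lambda>t. mu t * P n (-t + h)"]) (auto simp: mu_nonneg P_nonneg)
  moreover have "mu s * P n (-s + h) > 0" using n mu_pos[OF s] by simp
  ultimately have "P (Suc n) h > 0" using P_first[of n h] by linarith
  thus "h \<in> H" unfolding H_def by blast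
next
  assume "h \<in> H"
  then obtain n where n: "P n h > 0" unfolding H_def by blast
  have "mu (-s) * P n (-(-s) + (-s + h)) \<le> (\<Sum>t\<in>S. mu t * P n (-t + (-s + h)))"
    using symS[OF s] finS by (intro member_le_sum[where f="\<lambda>t. mu t * P n (-t + (-s + h))"]) (auto simp: mu_nonneg P_nonneg)
  moreover have "-(-s) + (-s + h) = h" by (simp add: add.assoc[symmetric])
  moreover have "mu (-s) * P n h > 0" using n mu_pos[OF s] mu_sym by simp
  ultimately have "P (Suc n) (-s + h) > 0" using P_first[of n "-s + h"] by simp
  thus "-s + h \<in> H" unfolding H_def by blast
qed

lemma H_inv: "h \<in> H \<Longrightarrow> -h \<in> H" unfolding H_def using P_sym by simp

definition cls where "cls x = {y. -x + y \<in> H}"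
definition cc where "cc x = (SOME y. y \<in> cls x)"

lemma cls_shift: assumes "s \<in> S" shows "cls (x + s) = cls x"
proof -
  have e: "\<And>y. -(x + s) + y = -s + (-x + y)" by (metis minus_add add.assoc)
  show ?thesis unfolding cls_def by (simp only: e H_left[OF assms])
qed

lemma cc_shift: "s \<in> S \<Longrightarrow> cc (x + s) = cc x"
  unfolding cc_def by (simp add: cls_shift)

lemma cc_mem: "-cc x + x \<in> H"
proof -
  have "x \<in> cls x" unfolding cls_def using H0 by simp
  hence "cc x \<in> cls x" unfolding cc_def by (rule someI)
  hence "-x + cc x \<in> H" unfolding cls_def by simp
  from H_inv[OF this] show ?thesis by (simp add: minus_add)
qed

definition th where "th = sqrt q"
lemma th_pos: "0 < th" unfolding th_def using q_pos by simp
lemma th_lt1: "th < 1" unfolding th_def using q_lt1 q_pos by simp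

lemma P_le: "P n g \<le> th ^ n"
proof (rule power2_le_imp_le)
  have "(th ^ n)\<^sup>2 = (th\<^sup>2) ^ n" by (simp add: power_mult[symmetric] mult.commute)
  also have "th\<^sup>2 = q" unfolding th_def using q_pos by simp
  finally show "(P n g)\<^sup>2 \<le> (th ^ n)\<^sup>2" using P_pt by simp
  show "0 \<le> th ^ n" using th_pos by simp
qed

definition r2 where "r2 = 2 / (1 + th)"
definition r where "r = (1 + r2) / 2"

lemma r2_gt1: "r2 > 1" unfolding r2_def using th_lt1 th_pos by (simp add: field_simps)
lemma r2th: "r2 * th < 1" unfolding r2_def using th_lt1 th_pos by (simp add: field_simps)
lemma r_gt1: "r > 1" unfolding r_def using r2_gt1 by simp
lemma r_lt_r2: "r < r2" unfolding r_def using r2_gt1 by simp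
lemma rth: "r * th < 1" using r2th r_lt_r2 th_pos by (smt (verit) mult_strict_right_mono)

lemma summ_aux: assumes "1 \<le> c" "c * th < 1" shows "summable (\<lambda>n. c ^ n * P n g)"
proof (rule summable_comparison_test'[where N=0])
  show "summable (\<lambda>n. (c * th) ^ n)" using assms th_pos by (intro summable_geometric) simp
  fix n
  have "c ^ n * P n g \<le> c ^ n * th ^ n" using assms P_le by (intro mult_left_mono) auto
  thus "norm (c ^ n * P n g) \<le> (c * th) ^ n" using assms P_nonneg by (simp add: power_mult_distrib)
qed

definition Gf where "Gf g = (\<Sum>n. r2 ^ n * P n g)"
lemma Gf_summable: "summable (\<lambda>n. r2 ^ n * P n g)" using summ_aux r2_gt1 r2th by simp

lemma Gf_pos: assumes "g \<in> H" shows "Gf g > 0"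
proof -
  obtain n where n: "P n g > 0" using assms unfolding H_def by blast
  have "(\<Sum>i\<in>{n}. r2 ^ i * P i g) \<le> Gf g"
    unfolding Gf_def using r2_gt1 by (intro sum_le_suminf Gf_summable) (auto simp: P_nonneg)
  moreover have "r2 ^ n * P n g > 0" using n r2_gt1 by simp
  ultimately show ?thesis by simp
qed

definition wf where "wf x = Gf (-cc x + x)"
lemma wf_pos: "wf x > 0" unfolding wf_def using Gf_pos cc_mem by blast

lemma Kop_wf: "Kop wf x \<le> wf x / r2"
proof -
  define g where "g = -cc x + x"
  have "Kop wf x = (\<Sum>s\<in>S. mu s * Gf (g + s))"
    unfolding Kop_def wf_def g_def by (intro sum.cong refl) (simp add: cc_shift add.assoc)
  also have "\<dots> = (\<Sum>s\<in>S. \<Sum>n. mu s * (r2 ^ n * P n (g + s)))"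
    unfolding Gf_def by (intro sum.cong refl) (simp add: suminf_mult Gf_summable)
  also have "\<dots> = (\<Sum>n. \<Sum>s\<in>S. mu s * (r2 ^ n * P n (g + s)))"
    by (rule suminf_sum[symmetric]) (simp add: summable_mult Gf_summable)
  also have "\<dots> = (\<Sum>n. r2 ^ n * P (Suc n) g)"
    by (simp add: Kop_def sum_distrib_left algebra_simps)
  also have "\<dots> = (\<Sum>n. r2 ^ Suc n * P (Suc n) g) / r2"
  proof -
    have "(\<Sum>n. r2 ^ Suc n * P (Suc n) g) = r2 * (\<Sum>n. r2 ^ n * P (Suc n) g)"
    proof -
      have "summable (\<lambda>n. r2 ^ n * P (Suc n) g)"
      proof -
        have "summable (\<lambda>n. r2 ^ Suc n * P (Suc n) g)"
          using Gf_summable[of g] by (subst summable_Suc_iff)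
        hence "summable (\<lambda>n. (1/r2) * (r2 ^ Suc n * P (Suc n) g))" by (rule summable_mult)
        thus ?thesis using r2_gt1 by simp
      qed
      thus ?thesis by (simp add: suminf_mult[symmetric] mult.assoc)
    qed
    thus ?thesis using r2_gt1 by simp
  qed
  also have "(\<Sum>n. r2 ^ Suc n * P (Suc n) g) = Gf g - P 0 g"
    unfolding Gf_def using suminf_split_head[OF Gf_summable[of g]] by simp
  also have "(Gf g - P 0 g) / r2 \<le> Gf g / r2"
    using r2_gt1 P_nonneg[of 0 g] by (intro divide_right_mono) auto
  finally show ?thesis unfolding wf_def g_def .
qed

lemma Kop_pow_wf: "(Kop ^^ n) wf x \<le> (1 / r2) ^ n * wf x"
proof (induction n arbitrary: x)
  case 0 thus ?case by simp
next
  case (Suc n)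
  have "(Kop ^^ Suc n) wf x = Kop ((Kop ^^ n) wf) x" by simp
  also have "\<dots> \<le> Kop (\<lambda>y. (1 / r2) ^ n * wf y) x" using Suc by (intro Kop_mono)
  also have "\<dots> = (1 / r2) ^ n * Kop wf x" by (rule Kop_scale)
  also have "\<dots> \<le> (1 / r2) ^ n * (wf x / r2)" using Kop_wf r2_gt1 by (intro mult_left_mono) auto
  also have "\<dots> = (1 / r2) ^ Suc n * wf x" by simp
  finally show ?case .
qed

end



context nf
begin

definition fr where "fr g = (\<Sum>n. r ^ n * P n g)"
lemma fr_summable: "summable (\<lambda>n. r ^ n * P n g)" using summ_aux r_gt1 rth by simp
lemma fr_nonneg: "0 \<le> fr g" unfolding fr_def
  using r_gt1 by (intro suminf_nonneg fr_summable) (auto simp: P_nonneg)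
lemma fr_ge: "r ^ n * P n g \<le> fr g"
proof -
  have "(\<Sum>i\<in>{n}. r ^ i * P i g) \<le> fr g"
    unfolding fr_def using r_gt1 by (intro sum_le_suminf fr_summable) (auto simp: P_nonneg)
  thus ?thesis by simp
qed

definition Cst where "Cst = 1 / (1 - r / r2)"

lemma key_sum:
  assumes Y: "finite Y" and K: "\<And>n. (\<Sum>y\<in>Y. P n (b y) * wf y) \<le> (Kop ^^ n) wf x"
  shows "(\<Sum>y\<in>Y. fr (b y) * wf y) \<le> wf x * Cst"
proof -
  have rr: "norm (r / r2) < 1" using r_gt1 r_lt_r2 by simp
  have "(\<Sum>y\<in>Y. fr (b y) * wf y) = (\<Sum>y\<in>Y. \<Sum>n. r ^ n * P n (b y) * wf y)"
    unfolding fr_def by (intro sum.cong refl) (simp add: suminf_mult2 fr_summable)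
  also have "\<dots> = (\<Sum>n. \<Sum>y\<in>Y. r ^ n * P n (b y) * wf y)"
    by (rule suminf_sum[symmetric]) (simp add: summable_mult2 fr_summable)
  also have "\<dots> \<le> (\<Sum>n. wf x * (r / r2) ^ n)"
  proof (rule suminf_le)
    fix n
    have "(\<Sum>y\<in>Y. r ^ n * P n (b y) * wf y) = r ^ n * (\<Sum>y\<in>Y. P n (b y) * wf y)"
      by (simp add: sum_distrib_left mult.assoc)
    also have "\<dots> \<le> r ^ n * ((1 / r2) ^ n * wf x)"
      using K[of n] Kop_pow_wf[of n x] r_gt1 by (intro mult_left_mono) auto
    also have "\<dots> = wf x * (r / r2) ^ n" by (simp add: power_divide)
    finally show "(\<Sum>y\<in>Y. r ^ n * P n (b y) * wf y) \<le> wf x * (r / r2) ^ n" .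
  next
    show "summable (\<lambda>n. \<Sum>y\<in>Y. r ^ n * P n (b y) * wf y)"
      by (intro summable_sum summable_mult2 fr_summable)
    show "summable (\<lambda>n. wf x * (r / r2) ^ n)" using rr by (intro summable_mult summable_geometric)
  qed
  also have "\<dots> = wf x * Cst" unfolding Cst_def using rr by (simp add: suminf_mult suminf_geometric)
  finally show ?thesis .
qed

definition R1 where "R1 x y = (if wf x \<le> wf y then fr (-x + y) else 0)"
definition R2 where "R2 x y = (if wf x \<le> wf y then 0 else fr (-x + y))"

lemma R1_nonneg: "0 \<le> R1 x y" unfolding R1_def using fr_nonneg by simp
lemma R2_nonneg: "0 \<le> R2 x y" unfolding R2_def using fr_nonneg by simp

lemma row_bound: assumes Y: "finite Y" shows "(\<Sum>y\<in>Y. R1 x y) \<le> Cst"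
proof -
  have "(\<Sum>y\<in>Y. R1 x y) \<le> (\<Sum>y\<in>Y. fr (-x + y) * wf y / wf x)"
  proof (intro sum_mono)
    fix y
    show "R1 x y \<le> fr (-x + y) * wf y / wf x"
    proof (cases "wf x \<le> wf y")
      case True
      have "fr (-x + y) * 1 \<le> fr (-x + y) * (wf y / wf x)"
        using True wf_pos[of x] fr_nonneg by (intro mult_left_mono) auto
      thus ?thesis using True unfolding R1_def by simp
    next
      case False thus ?thesis unfolding R1_def
        by (simp, intro divide_nonneg_pos mult_nonneg_nonneg) (auto simp: fr_nonneg less_imp_le wf_pos)
    qed
  qed
  also have "\<dots> = (\<Sum>y\<in>Y. fr (-x + y) * wf y) / wf x" by (simp add: sum_divide_distrib)
  also have "\<dots> \<le> (wf x * Cst) / wf x"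
  proof -
    have "(\<Sum>y\<in>Y. fr (-x + y) * wf y) \<le> wf x * Cst"
      by (rule key_sum[OF Y]) (rule kernel_row[OF Y less_imp_le[OF wf_pos]])
    thus ?thesis using wf_pos[of x] by (intro divide_right_mono) auto
  qed
  also have "\<dots> = Cst" using wf_pos[of x] by simp
  finally show ?thesis .
qed

lemma col_bound: assumes X: "finite X" shows "(\<Sum>x\<in>X. R2 x y) \<le> Cst"
proof -
  have "(\<Sum>x\<in>X. R2 x y) \<le> (\<Sum>x\<in>X. fr (-x + y) * wf x / wf y)"
  proof (intro sum_mono)
    fix x
    show "R2 x y \<le> fr (-x + y) * wf x / wf y"
    proof (cases "wf x \<le> wf y")
      case False
      have "fr (-x + y) * 1 \<le> fr (-x + y) * (wf x / wf y)"
        using False wf_pos[of y] fr_nonneg by (intro mult_left_mono) auto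
      thus ?thesis using False unfolding R2_def by simp
    next
      case True thus ?thesis unfolding R2_def
        by (simp, intro divide_nonneg_pos mult_nonneg_nonneg) (auto simp: fr_nonneg less_imp_le wf_pos)
    qed
  qed
  also have "\<dots> = (\<Sum>x\<in>X. fr (-x + y) * wf x) / wf y" by (simp add: sum_divide_distrib)
  also have "\<dots> \<le> (wf y * Cst) / wf y"
  proof -
    have "(\<Sum>x\<in>X. fr (-x + y) * wf x) \<le> wf y * Cst"
      by (rule key_sum[OF X]) (rule kernel_col[OF X less_imp_le[OF wf_pos]])
    thus ?thesis using wf_pos[of y] by (intro divide_right_mono) auto
  qed
  also have "\<dots> = Cst" using wf_pos[of y] by simp
  finally show ?thesis .
qed

lemma summable_bound:
  fixes F :: "'b \<Rightarrow> real"
  assumes nn: "\<And>y. 0 \<le> F y" and b: "\<And>Y. finite Y \<Longrightarrow> sum F Y \<le> C"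
  shows "(\<lambda>y. norm (complex_of_real (F y))) summable_on UNIV \<and> (\<Sum>\<^sub>\<infinity>y. norm (complex_of_real (F y))) \<le> C"
proof -
  have eq: "(\<lambda>y. norm (complex_of_real (F y))) = F" using nn by (simp add: abs_of_nonneg)
  have s: "F summable_on UNIV"
    by (rule nonneg_bdd_above_summable_on) (use nn b in \<open>auto intro!: bdd_aboveI2\<close>)
  have "infsum F UNIV \<le> C" by (rule infsum_le_finite_sums[OF s]) (use b in auto)
  thus ?thesis using s eq by simp
qed

lemma in_littlewood: "(\<lambda>g. complex_of_real (fr g)) \<in> littlewood"
proof -
  have 1: "\<forall>x y. complex_of_real (fr (- x + y)) = complex_of_real (R1 x y) + complex_of_real (R2 x y)"
    unfolding R1_def R2_def by simp
  have 2: "\<exists>C. \<forall>x. (\<lambda>y. norm (complex_of_real (R1 x y))) summable_on UNIV \<and>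
          (\<Sum>\<^sub>\<infinity>y. norm (complex_of_real (R1 x y))) \<le> C"
    using summable_bound[OF R1_nonneg row_bound] by blast
  have 3: "\<exists>C. \<forall>y. (\<lambda>x. norm (complex_of_real (R2 x y))) summable_on UNIV \<and>
          (\<Sum>\<^sub>\<infinity>x. norm (complex_of_real (R2 x y))) \<le> C"
    using summable_bound[OF R2_nonneg col_bound] by blast
  show ?thesis unfolding littlewood_def
    apply (rule CollectI)
    apply (rule exI[of _ "\<lambda>x y. complex_of_real (R1 x y)"])
    apply (rule exI[of _ "\<lambda>x y. complex_of_real (R2 x y)"])
    using 1 2 3 by simp
qed

end



context nf
begin

lemma not_lp: "\<exists>p>1. (\<lambda>g. complex_of_real (fr g)) \<notin> lp_space p"
proof -
  define cS where "cS = real (card S)"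
  have cS1: "cS \<ge> 1"
  proof -
    have "card S > 0" using finS zero_S by (auto simp: card_gt_0_iff)
    thus ?thesis unfolding cS_def by simp
  qed
  define \<delta> where "\<delta> = ln r / (2 * ln (cS + 1))"
  have lnr: "ln r > 0" using r_gt1 by simp
  have lnc: "ln (cS + 1) > 0" using cS1 by simp
  have dpos: "\<delta> > 0" unfolding \<delta>_def using lnr lnc by simp
  define p where "p = 1 + \<delta>"
  have p1: "p > 1" unfolding p_def using dpos by simp
  define \<beta> where "\<beta> = r powr p * cS powr (1 - p)"
  have \<beta>1: "\<beta> > 1"
  proof -
    have a: "r powr p = r * r powr \<delta>" unfolding p_def using r_gt1 by (simp add: powr_add)
    have b: "r powr \<delta> \<ge> 1" using r_gt1 dpos by (intro ge_one_powr_ge_zero) auto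
    have c: "cS powr (1 - p) \<ge> (cS + 1) powr (1 - p)"
      using p1 cS1 by (intro powr_mono2') auto
    have d: "(cS + 1) powr (1 - p) = exp (- (ln r / 2))"
    proof -
      have "(1 - p) * ln (cS + 1) = - (ln r / 2)" unfolding p_def \<delta>_def using lnc by (simp add: field_simps)
      thus ?thesis using cS1 by (simp add: powr_def)
    qed
    have e: "r * exp (- (ln r / 2)) = exp (ln r / 2)"
    proof -
      have "r = exp (ln r)" using r_gt1 by simp
      hence "r * exp (- (ln r / 2)) = exp (ln r + - (ln r / 2))" by (metis exp_add)
      thus ?thesis by simp
    qed
    have "\<beta> = r * r powr \<delta> * cS powr (1 - p)" unfolding \<beta>_def a by simp
    also have "\<dots> \<ge> r * 1 * (cS + 1) powr (1 - p)"
      using b c r_gt1 by (intro mult_mono) auto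
    finally have "\<beta> \<ge> exp (ln r / 2)" using d e by simp
    moreover have "exp (ln r / 2) > 1" using lnr by simp
    ultimately show ?thesis by linarith
  qed
  show ?thesis
  proof (intro exI[of _ p] conjI notI)
    show "p > 1" by (rule p1)
    assume "(\<lambda>g. complex_of_real (fr g)) \<in> lp_space p"
    hence summ: "(\<lambda>x. norm (complex_of_real (fr x)) powr p) summable_on UNIV"
      unfolding lp_space_def by simp
    define B where "B = infsum (\<lambda>x. norm (complex_of_real (fr x)) powr p) UNIV"
    have bound: "\<beta> ^ n \<le> B" for n
    proof -
      have s1: "(\<Sum>g\<in>Supp n. norm (complex_of_real (fr g)) powr p) \<le> B"
        unfolding B_def by (rule finite_sum_le_infsum[OF summ finSupp]) auto
      have s2: "(\<Sum>g\<in>Supp n. (r ^ n * P n g) powr p) \<le> (\<Sum>g\<in>Supp n. norm (complex_of_real (fr g)) powr p)"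
      proof (intro sum_mono)
        fix g
        have "(r ^ n * P n g) powr p \<le> fr g powr p"
          using fr_ge[of n g] r_gt1 p1 P_nonneg[of n g] by (intro powr_mono2) auto
        thus "(r ^ n * P n g) powr p \<le> norm (complex_of_real (fr g)) powr p"
          using fr_nonneg[of g] by (simp add: abs_of_nonneg)
      qed
      have s3: "(\<Sum>g\<in>Supp n. (r ^ n * P n g) powr p) = (r ^ n) powr p * (\<Sum>g\<in>Supp n. (P n g) powr p)"
        by (simp add: powr_mult sum_distrib_left)
      have ne: "Supp n \<noteq> {}" using sum_P[of n] by auto
      have posP: "P n g > 0" if "g \<in> Supp n" for g
        using that P_nonneg[of n g] unfolding Supp_def by (simp add: less_le)
      have s4: "real (card (Supp n)) powr (1 - p) \<le> (\<Sum>g\<in>Supp n. (P n g) powr p)"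
      proof (rule power_mean_lb[OF finSupp ne posP sum_P])
        show "1 \<le> p" using p1 by linarith
      qed
      have s5: "(cS ^ n) powr (1 - p) \<le> real (card (Supp n)) powr (1 - p)"
      proof (rule powr_mono2')
        show "1 - p \<le> 0" using p1 by simp
        show "0 < real (card (Supp n))" using finSupp ne by (simp add: card_gt_0_iff)
        have "card (Supp n) \<le> card S ^ n" using Supp_fin_card by blast
        hence "real (card (Supp n)) \<le> real (card S ^ n)" by (simp only: of_nat_le_iff)
        thus "real (card (Supp n)) \<le> cS ^ n" unfolding cS_def by simp
      qed
      have s6: "(r ^ n) powr p * (cS ^ n) powr (1 - p) = \<beta> ^ n"
        unfolding \<beta>_def using r_gt1 cS1 by (simp add: pow_powr power_mult_distrib)
      have rp: "(r ^ n) powr p \<ge> 0" by simp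
      have "\<beta> ^ n \<le> (r ^ n) powr p * (\<Sum>g\<in>Supp n. (P n g) powr p)"
        unfolding s6[symmetric] using s4 s5 rp by (intro mult_left_mono) auto
      thus ?thesis using s1 s2 s3 by linarith
    qed
    obtain n :: nat where n: "B < real n * (\<beta> - 1)"
      using ex_less_of_nat_mult[of "\<beta> - 1" B] \<beta>1 by auto
    have "1 + real n * (\<beta> - 1) \<le> (1 + (\<beta> - 1)) ^ n"
      by (rule Bernoulli_inequality) (use \<beta>1 in simp)
    hence "1 + real n * (\<beta> - 1) \<le> \<beta> ^ n" by simp
    with bound[of n] n show False by linarith
  qed
qed

end


lemma nonfolner_bnd:
  fixes G :: "'a::group_add set" and B :: "'a set"
  assumes h: "real (card ((\<lambda>a. h + a) ` (uminus ` B) - uminus ` B)) > e * real (card (uminus ` B))"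
    and fin: "finite B"
  shows "real (card {x\<in>B. x + - h \<notin> B}) > e * real (card B)"
proof -
  have key: "\<And>b. -(h + -b) = b + -h" by (simp add: minus_add)
  have eq: "(\<lambda>a. h + a) ` (uminus ` B) - uminus ` B = (\<lambda>b. h + -b) ` {b\<in>B. b + -h \<notin> B}"
  proof (intro equalityI subsetI)
    fix y assume "y \<in> (\<lambda>a. h + a) ` (uminus ` B) - uminus ` B"
    then obtain b where b: "b \<in> B" "y = h + -b" "y \<notin> uminus ` B" by auto
    have "b + -h \<notin> B"
    proof
      assume "b + -h \<in> B"
      hence "-(b + -h) \<in> uminus ` B" by blast
      moreover have "-(b + -h) = y" using b(2) by (simp add: minus_add)
      ultimately show False using b(3) by simp
    qed
    thus "y \<in> (\<lambda>b. h + -b) ` {b\<in>B. b + -h \<notin> B}" using b by blast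
  next
    fix y assume "y \<in> (\<lambda>b. h + -b) ` {b\<in>B. b + -h \<notin> B}"
    then obtain b where b: "b \<in> B" "b + -h \<notin> B" "y = h + -b" by auto
    have "y \<notin> uminus ` B"
    proof
      assume "y \<in> uminus ` B"
      then obtain c where c: "c \<in> B" "y = -c" by auto
      hence "c = -y" by simp
      also have "-y = b + -h" using b(3) key by simp
      finally show False using c(1) b(2) by simp
    qed
    moreover have "y \<in> (\<lambda>a. h + a) ` (uminus ` B)" using b by blast
    ultimately show "y \<in> (\<lambda>a. h + a) ` (uminus ` B) - uminus ` B" by blast
  qed
  have inj1: "inj_on (\<lambda>b. h + -b) X" for X by (rule inj_onI) (metis add_left_cancel neg_equal_iff_equal)
  have c1: "card ((\<lambda>a. h + a) ` (uminus ` B) - uminus ` B) = card {b\<in>B. b + -h \<notin> B}"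
    unfolding eq by (rule card_image[OF inj1])
  have c2: "card (uminus ` B) = card B" by (rule card_image) (rule inj_onI, simp)
  show ?thesis using h c1 c2 by simp
qed

theorem theorem1p1:
  assumes "\<not> amenable TYPE('a::group_add)"
  shows "\<exists>p::real. p > 1 \<and> \<not> ((littlewood :: ('a \<Rightarrow> complex) set) \<subseteq> lp_space p)"
proof -
  have "\<not> folner TYPE('a)" using assms folner_amenable by blast
  then obtain G :: "'a set" and e :: real where G: "finite G" and e: "e > 0"
    and nf0: "\<And>A. finite A \<Longrightarrow> A \<noteq> {} \<Longrightarrow>
        \<exists>h\<in>G. real (card ((\<lambda>a. h + a) ` A - A)) > e * real (card A)"
    unfolding folner_def by (auto simp: not_le)
  define S1 where "S1 = G \<union> uminus ` G"
  have "nf S1 e"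
  proof
    show "finite S1" unfolding S1_def using G by simp
    show "-s \<in> S1" if "s \<in> S1" for s using that unfolding S1_def by auto
    show "e > 0" by (rule e)
    show "\<exists>s\<in>S1. real (card {x\<in>B. x + s \<notin> B}) > e * real (card B)"
      if Bfin: "finite B" "B \<noteq> {}" for B
    proof -
      obtain h where h: "h \<in> G" "real (card ((\<lambda>a. h + a) ` (uminus ` B) - uminus ` B)) > e * real (card (uminus ` B))"
      proof -
        have "finite (uminus ` B)" "uminus ` B \<noteq> {}" using Bfin by auto
        from nf0[OF this] show ?thesis using that by blast
      qed
      have "-h \<in> S1" unfolding S1_def using h(1) by blast
      thus ?thesis using nonfolner_bnd[OF h(2) Bfin(1)] by blast
    qed
  qed
  then interpret nf S1 e .
  obtain p where p: "p > 1" "(\<lambda>g. complex_of_real (fr g)) \<notin> lp_space p" using not_lp by blast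
  show ?thesis using p in_littlewood by blast
qed

end
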